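(* Let ${\bold k}$ be an algebraically closed field of characteristic $p\ge3$. Then $(R_p\otimes{\bf Lie}_p)_{S_p}\cong{\bold k}$, i.e. the space of $S_p$-coinvariants of $R_p\otimes{\bf Lie}_p$ is one-dimensional.
   Context: ${\bf Lie}_p$ is the $S_p$-representation over ${\bold k}$ given by the arity-$p$ component of the Lie operad (the span of multilinear Lie monomials in $x_1,\dots,x_p$ in the free Lie algebra over ${\bold k}$). $R_p$ is the $(p-2)$-dimensional irreducible ${\bold k}S_p$-module of functions on $\{1,\dots,p\}$ with zero sum of values, modulo constant functions. *)

theory Defs
  imports "HOL-Computational_Algebra.Polynomial" "HOL-Combinatorics.Permutations" "HOL-Library.Function_Algebras"
begin

definition fscale :: "'k::field \<Rightarrow> ('x \<Rightarrow> 'k) \<Rightarrow> ('x \<Rightarrow> 'k)" where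
  "fscale c f = (\<lambda>x. c * f x)"

definition fspan :: "('x \<Rightarrow> 'k::field) set \<Rightarrow> ('x \<Rightarrow> 'k) set" where
  "fspan S = module.span fscale S"

definition fdim :: "('x \<Rightarrow> 'k::field) set \<Rightarrow> nat" where
  "fdim S = vector_space.dim fscale S"

definition alg_closed :: "'k::field itself \<Rightarrow> bool" where
  "alg_closed _ \<longleftrightarrow> (\<forall>q :: 'k poly. degree q > 0 \<longrightarrow> (\<exists>x. poly q x = 0))"

text \<open>Free associative algebra over k on generators x_i (i :: nat): noncommutative
  polynomials, represented as coefficient functions on words (nat lists).\<close>
definition wmult :: "(nat list \<Rightarrow> 'k::field) \<Rightarrow> (nat list \<Rightarrow> 'k) \<Rightarrow> nat list \<Rightarrow> 'k" where
  "wmult f g w = (\<Sum>i\<le>length w. f (take i w) * g (drop i w))"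

definition wgen :: "nat \<Rightarrow> nat list \<Rightarrow> 'k::field" where
  "wgen i w = (if w = [i] then 1 else 0)"

definition wbracket :: "(nat list \<Rightarrow> 'k::field) \<Rightarrow> (nat list \<Rightarrow> 'k) \<Rightarrow> nat list \<Rightarrow> 'k" where
  "wbracket f g = (\<lambda>w. wmult f g w - wmult g f w)"

text \<open>Multilinear Lie monomials: bracket expressions in which each generator x_i,
  i in A, occurs exactly once (realized inside the free associative algebra,
  which contains the free Lie algebra as the Lie subalgebra generated by the x_i).\<close>
inductive lie_mono :: "nat set \<Rightarrow> (nat list \<Rightarrow> 'k::field) \<Rightarrow> bool" where
  gen: "lie_mono {i} (wgen i)"
| br: "lie_mono A f \<Longrightarrow> lie_mono B g \<Longrightarrow> A \<inter> B = {} \<Longrightarrow> lie_mono (A \<union> B) (wbracket f g)"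

definition LieOp :: "nat \<Rightarrow> (nat list \<Rightarrow> 'k::field) set" where
  "LieOp p = fspan {f. lie_mono {1..p} f}"

text \<open>Zero-sum functions on {1..p} and constant functions on {1..p}
  (extended by 0 outside); R_p = RZ p / RC p.\<close>
definition RZ :: "nat \<Rightarrow> (nat \<Rightarrow> 'k::field) set" where
  "RZ p = {z. (\<forall>i. i \<notin> {1..p} \<longrightarrow> z i = 0) \<and> sum z {1..p} = 0}"

definition RC :: "nat \<Rightarrow> (nat \<Rightarrow> 'k::field) set" where
  "RC p = {z. \<exists>c. \<forall>i. z i = (if i \<in> {1..p} then c else 0)}"

text \<open>Tensor products of function spaces realized inside functions on the product.\<close>
definition ftensor :: "(nat \<Rightarrow> 'k::field) set \<Rightarrow> (nat list \<Rightarrow> 'k) set \<Rightarrow> (nat \<times> nat list \<Rightarrow> 'k) set" where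
  "ftensor Z L = fspan {(\<lambda>(i, w). z i * l w) | z l. z \<in> Z \<and> l \<in> L}"

definition tact :: "(nat \<Rightarrow> nat) \<Rightarrow> (nat \<times> nat list \<Rightarrow> 'k) \<Rightarrow> (nat \<times> nat list \<Rightarrow> 'k)" where
  "tact \<sigma> t = (\<lambda>(i, w). t (\<sigma> i, map \<sigma> w))"

text \<open>R_p tensor Lie_p = (RZ tensor Lie_p) / (RC tensor Lie_p); its S_p-coinvariants are
  the quotient of RZ tensor Lie_p by the subspace coinv_rel p.\<close>
definition coinv_rel :: "nat \<Rightarrow> (nat \<times> nat list \<Rightarrow> 'k::field) set" where
  "coinv_rel p = fspan (ftensor (RC p) (LieOp p) \<union>
     {(\<lambda>x. tact \<sigma> t x - t x) | \<sigma> t. \<sigma> permutes {1..p} \<and> t \<in> ftensor (RZ p) (LieOp p)})"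

definition coinv_dim :: "'k::field itself \<Rightarrow> nat \<Rightarrow> nat" where
  "coinv_dim _ p = fdim (ftensor (RZ p) (LieOp p) :: (nat \<times> nat list \<Rightarrow> 'k) set)
                   - fdim (coinv_rel p :: (nat \<times> nat list \<Rightarrow> 'k) set)"

end

theory Submission
  imports Defs
begin


interpretation fv: vector_space "fscale :: 'k::field \<Rightarrow> ('x \<Rightarrow> 'k) \<Rightarrow> ('x \<Rightarrow> 'k)"
  by unfold_locales (auto simp: fscale_def fun_eq_iff algebra_simps)

lemma fspan_eq: "fspan S = fv.span S" by (simp add: fspan_def)
lemma fspan_base: "x \<in> S \<Longrightarrow> x \<in> fspan S" by (simp add: fspan_def fv.span_base)
lemma fspan_diff: "x \<in> fspan S \<Longrightarrow> y \<in> fspan S \<Longrightarrow> x - y \<in> fspan S" by (simp add: fspan_def fv.span_diff)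
lemma fspan_add: "x \<in> fspan S \<Longrightarrow> y \<in> fspan S \<Longrightarrow> x + y \<in> fspan S" by (simp add: fspan_def fv.span_add)
lemma fspan_scale: "x \<in> fspan S \<Longrightarrow> fscale c x \<in> fspan S" by (simp add: fspan_def fv.span_scale)

lemma span_map:
  fixes h :: "('x \<Rightarrow> 'k::field) \<Rightarrow> ('y \<Rightarrow> 'k)"
  assumes add: "\<And>x y. h (x + y) = h x + h y"
    and sc: "\<And>c x. h (fscale c x) = fscale c (h x)"
    and x: "x \<in> fspan S" and SP: "\<And>s. s \<in> S \<Longrightarrow> h s \<in> fspan T"
  shows "h x \<in> fspan T"
proof -
  have h0: "h 0 = 0" using add[of 0 0] by simp
  have "subspace_ok": "fv.subspace {x. h x \<in> fspan T}"
    unfolding fv.subspace_def using h0 add sc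
    by (auto simp: fspan_eq intro: fv.span_add fv.span_scale fv.span_zero)
  show ?thesis using fv.span_induct[OF x[unfolded fspan_eq], of "\<lambda>x. h x \<in> fspan T"] subspace_ok SP by auto
qed

lemma wmult_addL: "wmult (f + g) h = wmult f h + wmult g h"
  by (simp add: wmult_def fun_eq_iff sum.distrib algebra_simps)
lemma wmult_addR: "wmult h (f + g) = wmult h f + wmult h g"
  by (simp add: wmult_def fun_eq_iff sum.distrib algebra_simps)
lemma wmult_diffL: "wmult (f - g) h = wmult f h - wmult g h"
  by (simp add: wmult_def fun_eq_iff sum_subtractf algebra_simps)
lemma wmult_diffR: "wmult h (f - g) = wmult h f - wmult h g"
  by (simp add: wmult_def fun_eq_iff sum_subtractf algebra_simps)
lemma wmult_scL: "wmult (fscale c f) h = fscale c (wmult f h)"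
  by (simp add: wmult_def fun_eq_iff fscale_def sum_distrib_left algebra_simps)
lemma wmult_scR: "wmult h (fscale c f) = fscale c (wmult h f)"
  by (simp add: wmult_def fun_eq_iff fscale_def sum_distrib_left algebra_simps)

lemma wbracket_eq: "wbracket f g = wmult f g - wmult g f"
  by (simp add: wbracket_def fun_eq_iff)

lemma wbr_addL: "wbracket (f + g) h = wbracket f h + wbracket g h"
  by (simp add: wbracket_eq wmult_addL wmult_addR)
lemma wbr_addR: "wbracket h (f + g) = wbracket h f + wbracket h g"
  by (simp add: wbracket_eq wmult_addL wmult_addR)
lemma fscale_diff: "fscale c (f - g) = fscale c f - fscale c g"
  by (simp add: fscale_def fun_eq_iff algebra_simps)
lemma wbr_scL: "wbracket (fscale c f) h = fscale c (wbracket f h)"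
  by (simp add: wbracket_eq wmult_scL wmult_scR fscale_diff)
lemma wbr_scR: "wbracket h (fscale c f) = fscale c (wbracket h f)"
  by (simp add: wbracket_eq wmult_scL wmult_scR fscale_diff)
lemma wbr_antisym: "wbracket g f = - wbracket f g"
  by (simp add: wbracket_eq)
lemma wbr_uminusL: "wbracket (- f) h = - wbracket f h"
  by (simp add: wbracket_def wmult_def fun_eq_iff sum_negf)

definition hom :: "nat \<Rightarrow> (nat list \<Rightarrow> 'k::field) \<Rightarrow> bool" where
  "hom n f \<longleftrightarrow> (\<forall>w. f w \<noteq> 0 \<longrightarrow> length w = n)"

lemma wmult_hom:
  assumes "hom a f"
  shows "wmult f g w = (if a \<le> length w then f (take a w) * g (drop a w) else 0)"
proof -
  have "wmult f g w = (\<Sum>i\<le>length w. if i = a then f (take a w) * g (drop a w) else 0)"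
    unfolding wmult_def
  proof (rule sum.cong)
    fix i assume "i \<in> {..length w}"
    then have "length (take i w) = i" by simp
    then show "f (take i w) * g (drop i w) = (if i = a then f (take a w) * g (drop a w) else 0)"
      using assms unfolding hom_def by (cases "i = a") auto
  qed simp
  also have "\<dots> = (if a \<le> length w then f (take a w) * g (drop a w) else 0)"
    by (simp add: sum.delta' atMost_iff)
  finally show ?thesis .
qed

lemma hom_wmult: "hom a f \<Longrightarrow> hom b g \<Longrightarrow> hom (a + b) (wmult f g)"
proof -
  assume f: "hom a f" and g: "hom b g"
  show ?thesis unfolding hom_def
  proof (intro allI impI)
    fix w assume "wmult f g w \<noteq> 0"
    then have "a \<le> length w" "g (drop a w) \<noteq> 0" by (auto simp: wmult_hom[OF f] split: if_splits)
    then show "length w = a + b" using g unfolding hom_def by fastforce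
  qed
qed

lemma hom_wbr: "hom a f \<Longrightarrow> hom b g \<Longrightarrow> hom (a + b) (wbracket f g)"
proof -
  assume f: "hom a f" and g: "hom b g"
  have 1: "hom (a+b) (wmult f g)" "hom (a+b) (wmult g f)"
    using hom_wmult[OF f g] hom_wmult[OF g f] by (auto simp: add.commute)
  show ?thesis unfolding hom_def wbracket_def
  proof (intro allI impI)
    fix w assume "wmult f g w - wmult g f w \<noteq> 0"
    then have "wmult f g w \<noteq> 0 \<or> wmult g f w \<noteq> 0" by auto
    then show "length w = a + b" using 1 unfolding hom_def by blast
  qed
qed

lemma hom_wgen: "hom 1 (wgen i)" by (simp add: hom_def wgen_def)

lemma wmult_assoc:
  assumes "hom a f" "hom b g" "hom c h"
  shows "wmult (wmult f g) h = wmult f (wmult g h)"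
proof
  fix w
  have fg: "hom (a+b) (wmult f g)" using hom_wmult assms by blast
  show "wmult (wmult f g) h w = wmult f (wmult g h) w"
  proof (cases "a + b \<le> length w")
    case True
    have e1: "take a (take (a+b) w) = take a w" by (simp add: min_def)
    have e2: "drop a (take (a+b) w) = take b (drop a w)" by (simp add: drop_take)
    have e3: "drop (a+b) w = drop b (drop a w)" by (simp add: add.commute)
    show ?thesis using True
      unfolding wmult_hom[OF fg, of h w] wmult_hom[OF assms(1), of "wmult g h" w]
        wmult_hom[OF assms(1), of g "take (a+b) w"] wmult_hom[OF assms(2), of h "drop a w"]
      by (simp add: e1 e2 e3)
  next
    case False
    show ?thesis using False
      unfolding wmult_hom[OF fg, of h w] wmult_hom[OF assms(1), of "wmult g h" w]
        wmult_hom[OF assms(2), of h "drop a w"]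
      by auto
  qed
qed

lemma jacobi:
  assumes "hom a u" "hom b v" "hom c x"
  shows "wbracket u (wbracket v x) = wbracket (wbracket u v) x - wbracket (wbracket u x) v"
proof -
  note A = wmult_assoc[OF assms(1) assms(2) assms(3)] wmult_assoc[OF assms(1) assms(3) assms(2)]
    wmult_assoc[OF assms(2) assms(1) assms(3)] wmult_assoc[OF assms(2) assms(3) assms(1)]
    wmult_assoc[OF assms(3) assms(1) assms(2)] wmult_assoc[OF assms(3) assms(2) assms(1)]
  show ?thesis
    by (simp add: wbracket_eq wmult_diffL wmult_diffR A)
qed

fun lnbl :: "(nat list \<Rightarrow> 'k::field) \<Rightarrow> nat list \<Rightarrow> nat list \<Rightarrow> 'k" where
  "lnbl f [] = f"
| "lnbl f (x # xs) = lnbl (wbracket f (wgen x)) xs"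

definition lnb :: "nat list \<Rightarrow> nat list \<Rightarrow> 'k::field" where
  "lnb c = (case c of [] \<Rightarrow> 0 | a # c' \<Rightarrow> lnbl (wgen a) c')"

lemma lnbl_snoc: "lnbl f (xs @ [x]) = wbracket (lnbl f xs) (wgen x)"
  by (induction xs arbitrary: f) auto

lemma lnb_single: "lnb [a] = wgen a" by (simp add: lnb_def)

lemma lnb_snoc: "c \<noteq> [] \<Longrightarrow> lnb (c @ [x]) = wbracket (lnb c) (wgen x)"
  by (cases c) (auto simp: lnb_def lnbl_snoc)

lemma lnbl_uminus: "lnbl (- f) xs = - lnbl f xs"
  by (induction xs arbitrary: f) (auto simp: wbr_uminusL)

lemma lnb_swap: "lnb (b # a # r) = - lnb (a # b # r)"
proof -
  have ee: "wbracket (wgen b) (wgen a) = - wbracket (wgen a) (wgen b)" by (rule wbr_antisym)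
  have "lnbl (wbracket (wgen b) (wgen a)) r = - lnbl (wbracket (wgen a) (wgen b)) r"
    by (simp only: ee lnbl_uminus)
  then show ?thesis by (simp add: lnb_def)
qed

lemma hom_lnbl: "hom n f \<Longrightarrow> hom (n + length xs) (lnbl f xs)"
proof (induction xs arbitrary: f n)
  case Nil then show ?case by simp
next
  case (Cons x xs)
  have "hom (n + 1) (wbracket f (wgen x))" by (rule hom_wbr[OF Cons.prems hom_wgen])
  from Cons.IH[OF this] show ?case by simp
qed

lemma hom_lnb: "hom (length c) (lnb c)" if "c \<noteq> []"
proof (cases c)
  case Nil then show ?thesis using that by simp
next
  case (Cons a c')
  then show ?thesis using hom_lnbl[OF hom_wgen[of a], of c'] by (simp add: lnb_def)
qed

definition lsup :: "nat set \<Rightarrow> (nat list \<Rightarrow> 'k::field) \<Rightarrow> bool" where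
  "lsup A f \<longleftrightarrow> (\<forall>w. f w \<noteq> 0 \<longrightarrow> set w \<subseteq> A)"

lemma lsup_wmult: "lsup A f \<Longrightarrow> lsup A g \<Longrightarrow> lsup A (wmult f g)"
proof -
  assume f: "lsup A f" and g: "lsup A g"
  show ?thesis unfolding lsup_def
  proof (intro allI impI)
    fix w assume "wmult f g w \<noteq> 0"
    then obtain i where "i \<le> length w" "f (take i w) * g (drop i w) \<noteq> 0"
      unfolding wmult_def by (metis (no_types, lifting) atMost_iff sum.neutral)
    then have "set (take i w) \<subseteq> A" "set (drop i w) \<subseteq> A" using f g unfolding lsup_def by auto
    then show "set w \<subseteq> A" by (metis append_take_drop_id set_append Un_subset_iff)
  qed
qed

lemma lsup_wbr: "lsup A f \<Longrightarrow> lsup A g \<Longrightarrow> lsup A (wbracket f g)"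
  using lsup_wmult[of A f g] lsup_wmult[of A g f] unfolding lsup_def wbracket_def
  by (metis diff_self)

lemma lsup_wgen: "i \<in> A \<Longrightarrow> lsup A (wgen i)" by (simp add: lsup_def wgen_def)

lemma lsup_lnbl: "lsup A f \<Longrightarrow> set xs \<subseteq> A \<Longrightarrow> lsup A (lnbl f xs)"
  by (induction xs arbitrary: f) (auto intro: lsup_wbr lsup_wgen)

lemma lsup_lnb: "set c \<subseteq> A \<Longrightarrow> lsup A (lnb c)"
proof (cases c)
  case Nil then show ?thesis by (simp add: lnb_def lsup_def)
next
  case (Cons a c')
  assume "set c \<subseteq> A"
  then show ?thesis using Cons lsup_lnbl[OF lsup_wgen, of a A c'] by (simp add: lnb_def)
qed

lemma wgen_map: "inj \<tau> \<Longrightarrow> wgen (\<tau> a) (map \<tau> w) = wgen a w"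
  by (auto simp: wgen_def inj_eq map_eq_Cons_conv)

lemma wmult_map: "wmult f g (map \<tau> w) = wmult (\<lambda>u. f (map \<tau> u)) (\<lambda>u. g (map \<tau> u)) w"
  by (simp add: wmult_def take_map drop_map)

lemma wbr_map: "wbracket f g (map \<tau> w) = wbracket (\<lambda>u. f (map \<tau> u)) (\<lambda>u. g (map \<tau> u)) w"
  by (simp add: wbracket_def wmult_map)

lemma lnbl_map: "inj \<tau> \<Longrightarrow> (\<lambda>w. lnbl f (map \<tau> xs) (map \<tau> w)) = lnbl (\<lambda>w. f (map \<tau> w)) xs"
proof (induction xs arbitrary: f)
  case Nil then show ?case by simp
next
  case (Cons x xs)
  have "(\<lambda>w. wbracket f (wgen (\<tau> x)) (map \<tau> w)) = wbracket (\<lambda>w. f (map \<tau> w)) (wgen x)"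
    using Cons.prems by (simp add: wbr_map wgen_map fun_eq_iff)
  then show ?case using Cons by simp
qed

lemma lnb_map: "inj \<tau> \<Longrightarrow> (\<lambda>w. lnb (map \<tau> c) (map \<tau> w)) = lnb c"
proof (cases c)
  case Nil then show ?thesis by (simp add: lnb_def fun_eq_iff)
next
  case (Cons a c')
  assume i: "inj \<tau>"
  have e: "(\<lambda>w. wgen (\<tau> a) (map \<tau> w)) = wgen a" using i by (simp add: wgen_map fun_eq_iff)
  have "(\<lambda>w. lnbl (wgen (\<tau> a)) (map \<tau> c') (map \<tau> w)) = lnbl (wgen a) c'"
    using lnbl_map[OF i, of "wgen (\<tau> a)" c'] unfolding e .
  then show ?thesis using Cons by (simp add: lnb_def)
qed

definition LN :: "nat set \<Rightarrow> (nat list \<Rightarrow> 'k::field) set" where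
  "LN A = {lnb e | e. e \<noteq> [] \<and> distinct e \<and> set e = A}"

lemma LN_I: "e \<noteq> [] \<Longrightarrow> distinct e \<Longrightarrow> set e = A \<Longrightarrow> lnb e \<in> LN A"
  unfolding LN_def by blast

lemma LN_E: assumes "s \<in> LN A" obtains e where "s = lnb e" "e \<noteq> []" "distinct e" "set e = A"
  using assms unfolding LN_def by blast

lemma L1:
  fixes h :: "nat list \<Rightarrow> 'k::field"
  assumes h: "h \<in> fspan (LN A)" and x: "x \<notin> A"
  shows "wbracket h (wgen x) \<in> fspan (LN (insert x A))"
proof (rule span_map[OF wbr_addL wbr_scL h])
  fix s :: "nat list \<Rightarrow> 'k" assume "s \<in> LN A"
  then obtain e where e: "s = lnb e" "e \<noteq> []" "distinct e" "set e = A" by (rule LN_E)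
  have "wbracket s (wgen x) = lnb (e @ [x])" using e by (simp add: lnb_snoc)
  moreover have "(lnb (e @ [x]) :: nat list \<Rightarrow> 'k) \<in> LN (insert x A)" by (rule LN_I) (use e x in auto)
  ultimately show "wbracket s (wgen x) \<in> fspan (LN (insert x A))"
    by (simp add: fspan_base)
qed

lemma K:
  "d \<noteq> [] \<Longrightarrow> c \<noteq> [] \<Longrightarrow> distinct (c @ d) \<Longrightarrow>
    wbracket (lnb c) (lnb d :: nat list \<Rightarrow> 'k::field) \<in> fspan (LN (set c \<union> set d))"
proof (induction d arbitrary: c rule: rev_induct)
  case Nil then show ?case by simp
next
  case (snoc x d')
  show ?case
  proof (cases "d' = []")
    case True
    have "wbracket (lnb c) (lnb (d' @ [x])) = (lnb (c @ [x]) :: nat list \<Rightarrow> 'k::field)"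
      using True snoc.prems by (simp add: lnb_single lnb_snoc)
    moreover have "(lnb (c @ [x]) :: nat list \<Rightarrow> 'k) \<in> LN (set c \<union> set (d' @ [x]))"
      by (rule LN_I) (use True snoc.prems in auto)
    ultimately show ?thesis by (simp add: fspan_base)
  next
    case False
    have J: "wbracket (lnb c) (lnb (d' @ [x]) :: nat list \<Rightarrow> 'k) =
      wbracket (wbracket (lnb c) (lnb d')) (wgen x) - wbracket (lnb (c @ [x])) (lnb d')"
      using jacobi[OF hom_lnb[OF snoc.prems(2)] hom_lnb[OF False] hom_wgen[of x]] False snoc.prems
      by (simp add: lnb_snoc)
    have 1: "wbracket (lnb c) (lnb d' :: nat list \<Rightarrow> 'k) \<in> fspan (LN (set c \<union> set d'))"
      using snoc.IH[OF False snoc.prems(2)] snoc.prems(3) by simp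
    have 2: "wbracket (wbracket (lnb c) (lnb d' :: nat list \<Rightarrow> 'k)) (wgen x) \<in> fspan (LN (insert x (set c \<union> set d')))"
      by (rule L1[OF 1]) (use snoc.prems(3) in auto)
    have 3: "wbracket (lnb (c @ [x])) (lnb d' :: nat list \<Rightarrow> 'k) \<in> fspan (LN (set (c @ [x]) \<union> set d'))"
      by (rule snoc.IH[OF False]) (use snoc.prems(3) in auto)
    have se: "insert x (set c \<union> set d') = set c \<union> set (d' @ [x])"
      "set (c @ [x]) \<union> set d' = set c \<union> set (d' @ [x])" by auto
    show ?thesis unfolding J using fspan_diff[OF 2[unfolded se] 3[unfolded se]] .
  qed
qed

lemma lie_span: "lie_mono A f \<Longrightarrow> (f :: nat list \<Rightarrow> 'k::field) \<in> fspan (LN A)"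
proof (induction rule: lie_mono.induct)
  case (gen i)
  have "(lnb [i] :: nat list \<Rightarrow> 'k::field) \<in> LN {i}" by (rule LN_I) auto
  then show ?case by (simp add: lnb_single fspan_base)
next
  case (br A f B g)
  have step1: "wbracket f (lnb e) \<in> fspan (LN (A \<union> B))"
    if e: "e \<noteq> []" "distinct e" "set e = B" for e
  proof (rule span_map[OF wbr_addL wbr_scL br.IH(1)])
    fix s :: "nat list \<Rightarrow> 'k" assume "s \<in> LN A"
    then obtain c where c: "s = lnb c" "c \<noteq> []" "distinct c" "set c = A" by (rule LN_E)
    have d: "distinct (c @ e)" using c e br.hyps(3) by simp
    show "wbracket s (lnb e) \<in> fspan (LN (A \<union> B))"
      using K[OF e(1) c(2) d] c(1,4) e(3) by simp
  qed
  show ?case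
  proof (rule span_map[OF wbr_addR wbr_scR br.IH(2)])
    fix s :: "nat list \<Rightarrow> 'k" assume "s \<in> LN B"
    then obtain e where "s = lnb e" "e \<noteq> []" "distinct e" "set e = B" by (rule LN_E)
    then show "wbracket f s \<in> fspan (LN (A \<union> B))" using step1 by simp
  qed
qed

lemma lnb_lie: "c \<noteq> [] \<Longrightarrow> distinct c \<Longrightarrow> lie_mono (set c) (lnb c :: nat list \<Rightarrow> 'k::field)"
proof (induction c rule: rev_induct)
  case Nil then show ?case by simp
next
  case (snoc x c)
  show ?case
  proof (cases "c = []")
    case True then show ?thesis by (simp add: lnb_single lie_mono.gen)
  next
    case False
    have "lie_mono (set c \<union> {x}) (wbracket (lnb c :: nat list \<Rightarrow> 'k) (wgen x))"
      by (rule lie_mono.br) (use snoc False in \<open>auto intro: lie_mono.gen\<close>)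
    then show ?thesis using False by (simp add: lnb_snoc)
  qed
qed

lemma LieOp_LN: "(LieOp p :: (nat list \<Rightarrow> 'k::field) set) = fspan (LN {1..p})"
proof (rule subset_antisym)
  show "LieOp p \<subseteq> (fspan (LN {1..p}) :: (nat list \<Rightarrow> 'k) set)"
    unfolding LieOp_def fspan_eq
  proof (rule fv.span_minimal)
    show "{f. lie_mono {1..p} f} \<subseteq> fv.span (LN {1..p} :: (nat list \<Rightarrow> 'k) set)"
      using lie_span[where 'k='k, of "{1..p}"] unfolding fspan_eq by blast
  qed simp
  show "(fspan (LN {1..p}) :: (nat list \<Rightarrow> 'k) set) \<subseteq> LieOp p"
    unfolding LieOp_def fspan_eq
  proof (rule fv.span_mono, rule subsetI)
    fix f assume "f \<in> (LN {1..p} :: (nat list \<Rightarrow> 'k) set)"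
    then obtain e where "f = lnb e" "e \<noteq> []" "distinct e" "set e = {1..p}" by (rule LN_E)
    then show "f \<in> {f. lie_mono {1..p} f}" using lnb_lie[of e] by simp
  qed
qed



definition tens :: "(nat \<Rightarrow> 'k::field) \<Rightarrow> (nat list \<Rightarrow> 'k) \<Rightarrow> nat \<times> nat list \<Rightarrow> 'k" where
  "tens z l = (\<lambda>(i, w). z i * l w)"

lemma ftensor_tens: "ftensor Z L = fspan {tens z l | z l. z \<in> Z \<and> l \<in> L}"
  by (simp add: ftensor_def tens_def)

lemma tens_addR: "tens z (l1 + l2) = tens z l1 + tens z l2"
  by (simp add: tens_def fun_eq_iff algebra_simps)
lemma tens_scR: "tens z (fscale c l) = fscale c (tens z l)"
  by (simp add: tens_def fscale_def fun_eq_iff algebra_simps)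
lemma tens_negR: "tens z (- l) = - tens z l"
  by (simp add: tens_def fun_eq_iff)
lemma tact_tens: "tact \<sigma> (tens z l) = tens (z \<circ> \<sigma>) (\<lambda>w. l (map \<sigma> w))"
  by (simp add: tact_def tens_def fun_eq_iff)
lemma tact_add: "tact \<sigma> (x + y) = tact \<sigma> x + tact \<sigma> y"
  by (simp add: tact_def fun_eq_iff split: prod.splits)
lemma tact_sc: "tact \<sigma> (fscale c x) = fscale c (tact \<sigma> x)"
  by (simp add: tact_def fscale_def fun_eq_iff split: prod.splits)
lemma comp_map_add: "(\<lambda>w. (l1 + l2) (map \<sigma> w)) = (\<lambda>w. l1 (map \<sigma> w)) + (\<lambda>w. l2 (map \<sigma> w))"
  by (simp add: fun_eq_iff)
lemma comp_map_sc: "(\<lambda>w. (fscale c l) (map \<sigma> w)) = fscale c (\<lambda>w. l (map \<sigma> w))"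
  by (simp add: fun_eq_iff fscale_def)

lemma tens_in_ftensor: "z \<in> Z \<Longrightarrow> l \<in> L \<Longrightarrow> tens z l \<in> ftensor Z L"
  unfolding ftensor_tens by (rule fspan_base) blast

lemma fspan_neg: "x \<in> fspan S \<Longrightarrow> - x \<in> fspan S" by (simp add: fspan_def fv.span_neg)
lemma fspan_zero: "0 \<in> fspan S" by (simp add: fspan_def fv.span_zero)
lemma fspan_mono: "S \<subseteq> T \<Longrightarrow> fspan S \<subseteq> fspan T" by (simp add: fspan_def fv.span_mono)
lemma fspan_minimal: "S \<subseteq> fspan T \<Longrightarrow> fspan S \<subseteq> fspan T"
  by (simp add: fspan_def fv.span_minimal)

lemma lin_zero:
  fixes \<phi> :: "('x \<Rightarrow> 'k::field) \<Rightarrow> 'k"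
  assumes add: "\<And>x y. \<phi> (x + y) = \<phi> x + \<phi> y"
    and sc: "\<And>c x. \<phi> (fscale c x) = c * \<phi> x"
    and x: "x \<in> fspan S" and SP: "\<And>s. s \<in> S \<Longrightarrow> \<phi> s = 0"
  shows "\<phi> x = 0"
proof -
  have "fscale 0 (0::'x \<Rightarrow> 'k) = 0" by (simp add: fscale_def fun_eq_iff)
  then have h0: "\<phi> 0 = 0" using sc[of 0 0] by simp
  have sub: "fv.subspace {x. \<phi> x = 0}"
    unfolding fv.subspace_def using h0 add sc by auto
  show ?thesis using fv.span_induct[OF x[unfolded fspan_eq], of "\<lambda>x. \<phi> x = 0"] sub SP by auto
qed

lemma span_supp:
  fixes x :: "'x \<Rightarrow> 'k::field"
  assumes x: "x \<in> fspan S" and SP: "\<And>s y. s \<in> S \<Longrightarrow> y \<notin> D \<Longrightarrow> s y = 0"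
  shows "\<forall>y. y \<notin> D \<longrightarrow> x y = 0"
proof -
  have sub: "fv.subspace {x :: 'x \<Rightarrow> 'k. \<forall>y. y \<notin> D \<longrightarrow> x y = 0}"
    unfolding fv.subspace_def by (auto simp: fscale_def)
  show ?thesis using fv.span_induct[OF x[unfolded fspan_eq], of "\<lambda>x. \<forall>y. y \<notin> D \<longrightarrow> x y = 0"] sub SP
    by auto
qed

definition delta :: "'x \<Rightarrow> 'x \<Rightarrow> 'k::field" where "delta x = (\<lambda>y. if y = x then 1 else 0)"

lemma supp_span:
  fixes f :: "'x \<Rightarrow> 'k::field"
  assumes "finite D" "\<forall>y. y \<notin> D \<longrightarrow> f y = 0"
  shows "f \<in> fspan (delta ` D)"
  using assms
proof (induction D arbitrary: f rule: finite_induct)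
  case empty
  then have "f = 0" by (auto simp: fun_eq_iff)
  then show ?case using fspan_zero by metis
next
  case (insert x D)
  define g where "g = f - fscale (f x) (delta x)"
  have "\<forall>y. y \<notin> D \<longrightarrow> g y = 0" using insert.prems insert.hyps
    by (auto simp: g_def fscale_def delta_def)
  then have "g \<in> fspan (delta ` D)" by (rule insert.IH)
  then have 1: "g \<in> fspan (delta ` insert x D)" using fspan_mono[of "delta ` D" "delta ` insert x D"] by blast
  have 2: "fscale (f x) (delta x) \<in> fspan (delta ` insert x D)" by (intro fspan_scale fspan_base) auto
  have "f = g + fscale (f x) (delta x)" by (simp add: g_def)
  then show ?case using fspan_add[OF 1 2] by simp
qed

lemma LieOp_map:
  assumes \<sigma>: "\<sigma> permutes {1..p}" and l: "l \<in> (LieOp p :: (nat list \<Rightarrow> 'k::field) set)"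
  shows "(\<lambda>w. l (map \<sigma> w)) \<in> LieOp p"
proof -
  have l': "l \<in> fspan (LN {1..p})" using l LieOp_LN by blast
  have "(\<lambda>w. l (map \<sigma> w)) \<in> fspan (LN {1..p})"
  proof (rule span_map[where h="\<lambda>l w. l (map \<sigma> w)", OF comp_map_add comp_map_sc l'])
    fix s :: "nat list \<Rightarrow> 'k" assume "s \<in> LN {1..p}"
    then obtain c where c: "s = lnb c" "c \<noteq> []" "distinct c" "set c = {1..p}" by (rule LN_E)
    define d where "d = map (inv \<sigma>) c"
    have inj: "inj \<sigma>" using \<sigma> by (rule permutes_inj)
    have md: "map \<sigma> d = c" unfolding d_def using permutes_inverses(1)[OF \<sigma>] by (simp add: map_idI)
    have "(\<lambda>w. s (map \<sigma> w)) = lnb d" using lnb_map[OF inj, of d] c(1) md by simp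
    moreover have "lnb d \<in> (LN {1..p} :: (nat list \<Rightarrow> 'k) set)"
    proof (rule LN_I)
      show "d \<noteq> []" using c(2) by (simp add: d_def)
      show "distinct d" unfolding d_def using c(3) inj_on_subset[OF permutes_inj[OF permutes_inv[OF \<sigma>]]]
        by (simp add: distinct_map)
      show "set d = {1..p}" unfolding d_def using c(4) permutes_image[OF permutes_inv[OF \<sigma>]] by simp
    qed
    ultimately show "(\<lambda>w. s (map \<sigma> w)) \<in> fspan (LN {1..p})" by (simp add: fspan_base)
  qed
  then show ?thesis using LieOp_LN by blast
qed

lemma RZ_perm:
  assumes \<sigma>: "\<sigma> permutes {1..p}" and z: "z \<in> (RZ p :: (nat \<Rightarrow> 'k::field) set)"
  shows "z \<circ> \<sigma> \<in> RZ p"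
proof -
  have "sum (z \<circ> \<sigma>) {1..p} = sum z {1..p}" using sum.permute[OF \<sigma>, of z] by simp
  moreover have "\<forall>i. i \<notin> {1..p} \<longrightarrow> (z \<circ> \<sigma>) i = 0"
    using z permutes_not_in[OF \<sigma>] by (auto simp: RZ_def)
  ultimately show ?thesis using z by (simp add: RZ_def)
qed

lemma V_tact:
  assumes \<sigma>: "\<sigma> permutes {1..p}" and t: "t \<in> (ftensor (RZ p) (LieOp p) :: (nat \<times> nat list \<Rightarrow> 'k::field) set)"
  shows "tact \<sigma> t \<in> ftensor (RZ p) (LieOp p)"
proof -
  have t': "t \<in> fspan {tens z l | z l. z \<in> RZ p \<and> l \<in> LieOp p}" using t by (simp add: ftensor_tens)
  show ?thesis unfolding ftensor_tens
  proof (rule span_map[OF tact_add tact_sc t'])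
    fix s assume "s \<in> {tens z l | z l. z \<in> (RZ p :: (nat \<Rightarrow> 'k) set) \<and> l \<in> LieOp p}"
    then obtain z l where s: "s = tens z l" "z \<in> RZ p" "l \<in> LieOp p" by blast
    show "tact \<sigma> s \<in> fspan {tens z l | z l. z \<in> (RZ p :: (nat \<Rightarrow> 'k) set) \<and> l \<in> LieOp p}"
      unfolding s tact_tens using tens_in_ftensor[OF RZ_perm[OF \<sigma> s(2)] LieOp_map[OF \<sigma> s(3)]]
      by (simp add: ftensor_tens)
  qed
qed

lemma W_rel:
  assumes "\<sigma> permutes {1..p}" "t \<in> (ftensor (RZ p) (LieOp p) :: (nat \<times> nat list \<Rightarrow> 'k::field) set)"
  shows "tact \<sigma> t - t \<in> coinv_rel p"
proof -
  have "tact \<sigma> t - t = (\<lambda>x. tact \<sigma> t x - t x)" by (simp add: fun_eq_iff)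
  then have "tact \<sigma> t - t \<in> {(\<lambda>x. tact \<sigma> t x - t x) | \<sigma> t. \<sigma> permutes {1..p} \<and> t \<in> ftensor (RZ p) (LieOp p)}"
    using assms by blast
  then show ?thesis unfolding coinv_rel_def by (intro fspan_base) blast
qed

lemma RC_RZ:
  assumes "(of_nat p :: 'k::field) = 0"
  shows "RC p \<subseteq> (RZ p :: (nat \<Rightarrow> 'k) set)"
proof
  fix z :: "nat \<Rightarrow> 'k" assume "z \<in> RC p"
  then obtain c where c: "\<forall>i. z i = (if i \<in> {1..p} then c else 0)" by (auto simp: RC_def)
  have "sum z {1..p} = sum (\<lambda>_. c) {1..p}" using c by simp
  also have "\<dots> = of_nat p * c" by simp
  finally show "z \<in> RZ p" using c assms by (simp add: RZ_def)
qed

lemma W_sub_V: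
  assumes "(of_nat p :: 'k::field) = 0"
  shows "coinv_rel p \<subseteq> (ftensor (RZ p) (LieOp p) :: (nat \<times> nat list \<Rightarrow> 'k) set)"
proof -
  have 1: "ftensor (RC p) (LieOp p) \<subseteq> (ftensor (RZ p) (LieOp p) :: (nat \<times> nat list \<Rightarrow> 'k) set)"
    unfolding ftensor_def by (rule fspan_mono) (use RC_RZ[OF assms] in blast)
  have 2: "{(\<lambda>x. tact \<sigma> t x - t x) | \<sigma> t. \<sigma> permutes {1..p} \<and> t \<in> ftensor (RZ p) (LieOp p)}
     \<subseteq> (ftensor (RZ p) (LieOp p) :: (nat \<times> nat list \<Rightarrow> 'k) set)"
  proof
    fix x assume "x \<in> {(\<lambda>x. tact \<sigma> t x - t x) | \<sigma> t. \<sigma> permutes {1..p} \<and> t \<in> (ftensor (RZ p) (LieOp p) :: (nat \<times> nat list \<Rightarrow> 'k) set)}"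
    then obtain \<sigma> t where x: "x = (\<lambda>x. tact \<sigma> t x - t x)" "\<sigma> permutes {1..p}" "t \<in> ftensor (RZ p) (LieOp p)" by blast
    have "x = tact \<sigma> t - t" using x(1) by (simp add: fun_eq_iff)
    moreover have "tact \<sigma> t - t \<in> ftensor (RZ p) (LieOp p)"
      unfolding ftensor_def by (rule fspan_diff) (use V_tact[OF x(2,3)] x(3) in \<open>simp_all add: ftensor_def\<close>)
    ultimately show "x \<in> ftensor (RZ p) (LieOp p)" by simp
  qed
  have "ftensor (RZ p) (LieOp p) = fspan (ftensor (RZ p) (LieOp p) :: (nat \<times> nat list \<Rightarrow> 'k) set)"
    unfolding ftensor_def fspan_eq by (simp add: fv.span_span)
  moreover have "coinv_rel p \<subseteq> fspan (ftensor (RZ p) (LieOp p) :: (nat \<times> nat list \<Rightarrow> 'k) set)"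
    unfolding coinv_rel_def by (rule fspan_minimal) (use 1 2 fspan_base in blast)
  ultimately show ?thesis by simp
qed

definition Wn :: "nat set \<Rightarrow> nat \<Rightarrow> nat list set" where
  "Wn A n = {w. set w \<subseteq> A \<and> length w = n}"

lemma Wn_finite: "finite A \<Longrightarrow> finite (Wn A n)"
  unfolding Wn_def by (rule finite_lists_length_eq)

lemma sum_split:
  assumes A: "finite A"
  shows "(\<Sum>w\<in>Wn A (a+b). F w) = (\<Sum>u\<in>Wn A a. \<Sum>v\<in>Wn A b. F (u @ v))"
proof -
  have bij: "bij_betw (\<lambda>(u,v). u @ v) (Wn A a \<times> Wn A b) (Wn A (a+b))"
  proof (rule bij_betw_imageI)
    show "inj_on (\<lambda>(u,v). u @ v) (Wn A a \<times> Wn A b)"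
      by (auto simp: inj_on_def Wn_def)
    show "(\<lambda>(u,v). u @ v) ` (Wn A a \<times> Wn A b) = Wn A (a+b)"
    proof
      show "(\<lambda>(u,v). u @ v) ` (Wn A a \<times> Wn A b) \<subseteq> Wn A (a+b)" by (auto simp: Wn_def)
      show "Wn A (a+b) \<subseteq> (\<lambda>(u,v). u @ v) ` (Wn A a \<times> Wn A b)"
      proof
        fix w assume w: "w \<in> Wn A (a+b)"
        have "(take a w, drop a w) \<in> Wn A a \<times> Wn A b" using w
          by (auto simp: Wn_def dest: in_set_takeD in_set_dropD)
        then show "w \<in> (\<lambda>(u,v). u @ v) ` (Wn A a \<times> Wn A b)"
          by (metis (no_types, lifting) append_take_drop_id case_prod_conv image_eqI)
      qed
    qed
  qed
  have "(\<Sum>w\<in>Wn A (a+b). F w) = (\<Sum>x\<in>Wn A a \<times> Wn A b. F ((\<lambda>(u,v). u @ v) x))"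
    using sum.reindex_bij_betw[OF bij, of F] by simp
  also have "\<dots> = (\<Sum>u\<in>Wn A a. \<Sum>v\<in>Wn A b. F (u @ v))"
    by (simp add: sum.cartesian_product case_prod_beta)
  finally show ?thesis .
qed

lemma sum_W1:
  assumes "x \<in> A" and A: "finite A"
  shows "(\<Sum>v\<in>Wn A 1. (wgen x v :: 'k::field) * K v) = K [x]"
proof -
  have "(\<Sum>v\<in>Wn A 1. (wgen x v :: 'k) * K v) = (\<Sum>v\<in>Wn A 1. if v = [x] then K [x] else 0)"
    by (rule sum.cong) (auto simp: wgen_def)
  also have "\<dots> = K [x]" using assms sum.delta[OF Wn_finite[OF A, of 1], of "[x]" "\<lambda>_. K [x]"]
    by (simp add: Wn_def)
  finally show ?thesis .
qed

lemma br_sumH: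
  assumes A: "finite A" and x: "x \<in> A" and f: "hom k f"
  shows "(\<Sum>w\<in>Wn A (k+1). H w * wbracket f (wgen x) w) =
    (\<Sum>u\<in>Wn A k. H (u @ [x]) * f u) - (\<Sum>u\<in>Wn A k. H (x # u) * (f u :: 'k::field))"
proof -
  have e: "H w * wbracket f (wgen x) w = H w * f (take k w) * wgen x (drop k w) - H w * wgen x (take 1 w) * f (drop 1 w)"
    if "w \<in> Wn A (k+1)" for w
    using that by (simp add: wbracket_def wmult_hom[OF f] wmult_hom[OF hom_wgen] Wn_def algebra_simps)
  have s1: "(\<Sum>w\<in>Wn A (k+1). H w * f (take k w) * wgen x (drop k w)) = (\<Sum>u\<in>Wn A k. H (u @ [x]) * f u)"
  proof -
    have "(\<Sum>w\<in>Wn A (k+1). H w * f (take k w) * wgen x (drop k w))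
        = (\<Sum>u\<in>Wn A k. \<Sum>v\<in>Wn A 1. H (u @ v) * f (take k (u @ v)) * wgen x (drop k (u @ v)))"
      by (rule sum_split[OF A])
    also have "\<dots> = (\<Sum>u\<in>Wn A k. \<Sum>v\<in>Wn A 1. wgen x v * (H (u @ v) * f u))"
      by (intro sum.cong refl) (auto simp: Wn_def mult.commute mult.left_commute)
    also have "\<dots> = (\<Sum>u\<in>Wn A k. H (u @ [x]) * f u)"
      by (intro sum.cong refl) (rule sum_W1[OF x A])
    finally show ?thesis .
  qed
  have s2: "(\<Sum>w\<in>Wn A (k+1). H w * wgen x (take 1 w) * f (drop 1 w)) = (\<Sum>u\<in>Wn A k. H (x # u) * f u)"
  proof -
    have "(\<Sum>w\<in>Wn A (k+1). H w * wgen x (take 1 w) * f (drop 1 w))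
        = (\<Sum>w\<in>Wn A (1+k). H w * wgen x (take 1 w) * f (drop 1 w))" by (simp add: add.commute)
    also have "\<dots> = (\<Sum>v\<in>Wn A 1. \<Sum>u\<in>Wn A k. H (v @ u) * wgen x (take 1 (v @ u)) * f (drop 1 (v @ u)))"
      by (rule sum_split[OF A])
    also have "\<dots> = (\<Sum>u\<in>Wn A k. \<Sum>v\<in>Wn A 1. wgen x v * (H (v @ u) * f u))"
      by (subst sum.swap) (intro sum.cong refl, auto simp: Wn_def mult.commute mult.left_commute)
    also have "\<dots> = (\<Sum>u\<in>Wn A k. H (x # u) * f u)"
      by (intro sum.cong refl) (subst sum_W1[OF x A], simp)
    finally show ?thesis .
  qed
  show ?thesis using e s1 s2 by (simp add: sum_subtractf)
qed

lemma S_lnb_zero: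
  assumes A: "finite A" and e: "2 \<le> length e" "set e \<subseteq> A"
  shows "(\<Sum>w\<in>Wn A (length e). (lnb e w :: 'k::field)) = 0"
proof -
  obtain e' x where ex: "e = e' @ [x]" using e(1) by (cases e rule: rev_exhaust) auto
  have ne: "e' \<noteq> []" using ex e(1) by auto
  have x: "x \<in> A" using ex e(2) by auto
  have "(\<Sum>w\<in>Wn A (length e' + 1). 1 * wbracket (lnb e' :: nat list \<Rightarrow> 'k) (wgen x) w) = 0"
    using br_sumH[OF A x hom_lnb[OF ne], of "\<lambda>_. 1"] by simp
  then show ?thesis using ex ne by (simp add: lnb_snoc)
qed

lemma S_LieOp:
  assumes p: "2 \<le> p" and l: "l \<in> (LieOp p :: (nat list \<Rightarrow> 'k::field) set)"
  shows "(\<Sum>w\<in>Wn {1..p} p. l w) = 0"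
proof (rule lin_zero[where \<phi>="\<lambda>l. \<Sum>w\<in>Wn {1..p} p. l w"])
  show "l \<in> fspan (LN {1..p})" using l LieOp_LN by blast
  show "(\<Sum>w\<in>Wn {1..p} p. (x + y) w) = (\<Sum>w\<in>Wn {1..p} p. x w) + (\<Sum>w\<in>Wn {1..p} p. y w)" for x y :: "nat list \<Rightarrow> 'k"
    by (simp add: sum.distrib)
  show "(\<Sum>w\<in>Wn {1..p} p. fscale c x w) = c * (\<Sum>w\<in>Wn {1..p} p. x w)" for c and x :: "nat list \<Rightarrow> 'k"
    by (simp add: fscale_def sum_distrib_left)
  fix s :: "nat list \<Rightarrow> 'k" assume "s \<in> LN {1..p}"
  then obtain e where e: "s = lnb e" "e \<noteq> []" "distinct e" "set e = {1..p}" by (rule LN_E)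
  have le: "length e = p" using distinct_card[OF e(3)] e(4) by simp
  show "(\<Sum>w\<in>Wn {1..p} p. s w) = 0" using S_lnb_zero[of "{1..p}" e] le e p by simp
qed

lemma G_b:
  assumes "1 \<le> k" "k \<le> p"
  shows "(\<Sum>w\<in>Wn {1..p} k. (lnb [1..<k+1] w :: 'k::field)) = (if k = 1 then 1 else 0) \<and>
    (\<forall>i. (\<Sum>w\<in>Wn {1..p} k. (if hd w = i then 1 else 0) * (lnb [1..<k+1] w :: 'k)) =
       (if i = 1 then 1 else 0) - (if i = 2 \<and> 2 \<le> k then 1 else 0))"
  using assms
proof (induction k)
  case 0 then show ?case by simp
next
  case (Suc k)
  have A: "finite {1..p}" by simp
  show ?case
  proof (cases "k = 0")
    case True
    have l1: "lnb [1..<Suc k + 1] = (wgen 1 :: nat list \<Rightarrow> 'k)" using True by (simp add: lnb_single)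
    have 1: "(1::nat) \<in> {1..p}" using Suc.prems by simp
    show ?thesis unfolding l1 using True sum_W1[OF 1 A, where 'k='k, of "\<lambda>_. 1"]
      sum_W1[OF 1 A, where 'k='k, of "\<lambda>w. if hd w = i then 1 else 0" for i]
      by (simp add: mult.commute)
  next
    case False
    have IH: "(\<Sum>w\<in>Wn {1..p} k. (lnb [1..<k+1] w :: 'k)) = (if k = 1 then 1 else 0)"
      "\<And>i. (\<Sum>w\<in>Wn {1..p} k. (if hd w = i then 1 else 0) * (lnb [1..<k+1] w :: 'k)) =
       (if i = 1 then 1 else 0) - (if i = 2 \<and> 2 \<le> k then 1 else 0)"
      using Suc.IH False Suc.prems by auto
    have ne: "[1..<k+1] \<noteq> []" using False by simp
    have len: "length [1..<k+1] = k" by simp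
    have hk: "hom k (lnb [1..<k+1] :: nat list \<Rightarrow> 'k)" using hom_lnb[OF ne] unfolding len .
    have x: "Suc k \<in> {1..p}" using Suc.prems by simp
    have eq: "lnb [1..<Suc k + 1] = wbracket (lnb [1..<k+1]) (wgen (Suc k) :: nat list \<Rightarrow> 'k)"
      using lnb_snoc[OF ne, of "Suc k"] by simp
    have S: "(\<Sum>w\<in>Wn {1..p} (Suc k). (lnb [1..<Suc k+1] w :: 'k)) = 0"
      using br_sumH[OF A x hk, of "\<lambda>_. 1"] unfolding eq by simp
    have G: "(\<Sum>w\<in>Wn {1..p} (Suc k). (if hd w = i then 1 else 0) * (lnb [1..<Suc k+1] w :: 'k)) =
       (if i = 1 then 1 else 0) - (if i = 2 \<and> 2 \<le> Suc k then 1 else 0)" for i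
    proof -
      have "(\<Sum>w\<in>Wn {1..p} (Suc k). (if hd w = i then 1 else 0) * (lnb [1..<Suc k+1] w :: 'k)) =
        (\<Sum>u\<in>Wn {1..p} k. (if hd (u @ [Suc k]) = i then 1 else 0) * lnb [1..<k+1] u) -
        (\<Sum>u\<in>Wn {1..p} k. (if hd (Suc k # u) = i then 1 else 0) * lnb [1..<k+1] u)"
        using br_sumH[OF A x hk, of "\<lambda>w. if hd w = i then 1 else 0"] unfolding eq by simp
      also have "(\<Sum>u\<in>Wn {1..p} k. (if hd (u @ [Suc k]) = i then 1 else 0) * (lnb [1..<k+1] u :: 'k)) =
          (\<Sum>u\<in>Wn {1..p} k. (if hd u = i then 1 else 0) * lnb [1..<k+1] u)"
        by (rule sum.cong) (use False in \<open>auto simp: Wn_def hd_append\<close>)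
      also have "(\<Sum>u\<in>Wn {1..p} k. (if hd (Suc k # u) = i then 1 else 0) * (lnb [1..<k+1] u :: 'k)) =
          (if Suc k = i then 1 else 0) * (if k = 1 then 1 else 0)"
        using IH(1) by (simp add: sum_distrib_left[symmetric])
      finally show ?thesis using IH(2)[of i] False by auto
    qed
    show ?thesis using S G False by simp
  qed
qed

definition phi :: "nat \<Rightarrow> (nat \<times> nat list \<Rightarrow> 'k::field) \<Rightarrow> 'k" where
  "phi p t = (\<Sum>w\<in>Wn {1..p} p. t (hd w, w))"

lemma phi_add: "phi p (x + y) = phi p x + phi p y"
  by (simp add: phi_def sum.distrib)
lemma phi_sc: "phi p (fscale c x) = c * phi p x"
  by (simp add: phi_def fscale_def sum_distrib_left)

lemma map_bij:
  assumes \<sigma>: "\<sigma> permutes A"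
  shows "bij_betw (map \<sigma>) (Wn A n) (Wn A n)"
proof (rule bij_betw_imageI)
  show "inj_on (map \<sigma>) (Wn A n)" using permutes_inj[OF \<sigma>]
    by (metis inj_mapI inj_on_subset subset_UNIV)
  show "map \<sigma> ` Wn A n = Wn A n"
  proof
    show "map \<sigma> ` Wn A n \<subseteq> Wn A n" using permutes_image[OF \<sigma>] by (force simp: Wn_def)
    show "Wn A n \<subseteq> map \<sigma> ` Wn A n"
    proof
      fix w assume w: "w \<in> Wn A n"
      have "map (inv \<sigma>) w \<in> Wn A n" using w permutes_image[OF permutes_inv[OF \<sigma>]] by (force simp: Wn_def)
      moreover have "w = map \<sigma> (map (inv \<sigma>) w)" using permutes_inverses(1)[OF \<sigma>] by (simp add: map_idI)
      ultimately show "w \<in> map \<sigma> ` Wn A n" by blast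
    qed
  qed
qed

lemma phi_tact:
  assumes \<sigma>: "\<sigma> permutes {1..p}" and p: "1 \<le> p"
  shows "phi p (tact \<sigma> t) = phi p t"
proof -
  have "phi p (tact \<sigma> t) = (\<Sum>w\<in>Wn {1..p} p. (\<lambda>w. t (hd w, w)) (map \<sigma> w))"
    unfolding phi_def tact_def
  proof (rule sum.cong)
    fix w assume "w \<in> Wn {1..p} p"
    then have "w \<noteq> []" using p by (auto simp: Wn_def)
    then show "(case (hd w, w) of (i, w) \<Rightarrow> t (\<sigma> i, map \<sigma> w)) = (\<lambda>w. t (hd w, w)) (map \<sigma> w)"
      by (simp add: hd_map)
  qed simp
  also have "\<dots> = (\<Sum>w\<in>Wn {1..p} p. t (hd w, w))"
    by (rule sum.reindex_bij_betw[OF map_bij[OF \<sigma>]])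
  finally show ?thesis by (simp add: phi_def)
qed

lemma phi_RC:
  assumes z: "z \<in> RC p" and l: "l \<in> (LieOp p :: (nat list \<Rightarrow> 'k::field) set)" and p: "2 \<le> p"
  shows "phi p (tens z l) = 0"
proof -
  obtain c where c: "\<forall>i. z i = (if i \<in> {1..p} then c else 0)" using z by (auto simp: RC_def)
  have "phi p (tens z l) = (\<Sum>w\<in>Wn {1..p} p. c * l w)"
    unfolding phi_def tens_def
  proof (rule sum.cong)
    fix w assume "w \<in> Wn {1..p} p"
    then have "hd w \<in> {1..p}" using p by (cases w) (auto simp: Wn_def)
    then show "(case (hd w, w) of (i, w) \<Rightarrow> z i * l w) = c * l w" using c by simp
  qed simp
  also have "\<dots> = 0" using S_LieOp[OF p l] by (simp add: sum_distrib_left[symmetric])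
  finally show ?thesis .
qed

lemma phi_W:
  assumes p: "2 \<le> p" and t: "t \<in> (coinv_rel p :: (nat \<times> nat list \<Rightarrow> 'k::field) set)"
  shows "phi p t = 0"
proof (rule lin_zero[where \<phi>="phi p", OF phi_add phi_sc t[unfolded coinv_rel_def]])
  fix s assume s: "s \<in> ftensor (RC p) (LieOp p) \<union> {(\<lambda>x. tact \<sigma> t x - t x) | \<sigma> t. \<sigma> permutes {1..p} \<and> t \<in> (ftensor (RZ p) (LieOp p) :: (nat \<times> nat list \<Rightarrow> 'k) set)}"
  show "phi p s = 0"
  proof (cases "s \<in> ftensor (RC p) (LieOp p)")
    case True
    show ?thesis
    proof (rule lin_zero[where \<phi>="phi p", OF phi_add phi_sc True[unfolded ftensor_tens]])
      fix r assume "r \<in> {tens z l | z l. z \<in> RC p \<and> l \<in> (LieOp p :: (nat list \<Rightarrow> 'k) set)}"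
      then show "phi p r = 0" using phi_RC p by blast
    qed
  next
    case False
    then obtain \<sigma> t where st: "s = (\<lambda>x. tact \<sigma> t x - t x)" "\<sigma> permutes {1..p}" using s by blast
    have "phi p s = phi p (tact \<sigma> t) - phi p t" unfolding st(1) phi_def by (simp add: sum_subtractf)
    then show ?thesis using phi_tact[OF st(2)] p by simp
  qed
qed

definition e12 :: "nat \<Rightarrow> 'k::field" where
  "e12 i = (if i = 1 then 1 else 0) - (if i = 2 then 1 else 0)"

lemma phi_v0:
  assumes p: "2 \<le> p"
  shows "phi p (tens e12 (lnb [1..<p+1])) = (2 :: 'k::field)"
proof -
  have "phi p (tens e12 (lnb [1..<p+1])) =
     (\<Sum>w\<in>Wn {1..p} p. (if hd w = 1 then 1 else 0) * (lnb [1..<p+1] w :: 'k)) -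
     (\<Sum>w\<in>Wn {1..p} p. (if hd w = 2 then 1 else 0) * (lnb [1..<p+1] w :: 'k))"
    unfolding phi_def tens_def e12_def by (simp add: sum_subtractf algebra_simps)
  also have "\<dots> = 2" using G_b[of p p, where 'k='k] p by simp
  finally show ?thesis .
qed

lemma lnb_in_LieOp:
  assumes "c \<noteq> []" "distinct c" "set c = {1..p}"
  shows "lnb c \<in> (LieOp p :: (nat list \<Rightarrow> 'k::field) set)"
  using fspan_base[OF LN_I[OF assms]] LieOp_LN by blast

lemma UB1:
  assumes p: "2 \<le> p" and two: "(2::'k::field) \<noteq> 0" and z: "z \<in> (RZ p :: (nat \<Rightarrow> 'k) set)"
  shows "tens z (lnb [1..<p+1]) \<in> fspan (insert (tens e12 (lnb [1..<p+1])) (coinv_rel p))"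
proof -
  define bb :: "nat list \<Rightarrow> 'k" where "bb = lnb [1..<p+1]"
  define v0 where "v0 = tens e12 bb"
  define \<alpha> where "\<alpha> = (z 1 - z 2) / 2"
  define y where "y = (\<lambda>i. z i - \<alpha> * e12 i)"
  define h where "h = (\<lambda>i. y i / 2)"
  define s where "s = Transposition.transpose (1::nat) 2"
  have e12_out: "e12 i = 0" if "i \<notin> {1..p}" for i using that p by (auto simp: e12_def)
  have e12_sum: "sum e12 {1..p} = (0::'k)"
    using p by (simp add: e12_def sum_subtractf)
  have zsum: "sum z {1..p} = 0" and zout: "\<And>i. i \<notin> {1..p} \<Longrightarrow> z i = 0" using z by (auto simp: RZ_def)
  have ysum: "sum y {1..p} = 0" unfolding y_def
    using zsum e12_sum by (simp add: sum_subtractf sum_distrib_left[symmetric])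
  have hRZ: "h \<in> RZ p" unfolding RZ_def
    using ysum zout e12_out by (auto simp: h_def y_def sum_divide_distrib[symmetric])
  have h12: "h 1 = h 2" using two unfolding h_def y_def \<alpha>_def e12_def by (simp add: field_simps)
  have sP: "s permutes {1..p}" unfolding s_def using p by (intro permutes_swap_id) auto
  have hs: "h \<circ> s = h"
  proof
    fix i show "(h \<circ> s) i = h i" using h12 by (auto simp: s_def transpose_def)
  qed
  have ne: "[1..<p+1] \<noteq> []" "distinct [1..<p+1]" "set [1..<p+1] = {1..p}" using p by auto
  have bbL: "bb \<in> LieOp p" unfolding bb_def by (rule lnb_in_LieOp[OF ne])
  have tV: "tens h bb \<in> ftensor (RZ p) (LieOp p)" by (rule tens_in_ftensor[OF hRZ bbL])
  have up: "[1..<p+1] = 1 # 2 # [3..<p+1]" using p by (simp add: upt_conv_Cons numeral_3_eq_3)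
  have m3: "map s [3..<p+1] = [3..<p+1]" by (rule map_idI) (auto simp: s_def)
  have md: "map s (2 # 1 # [3..<p+1]) = [1..<p+1]" using m3 up by (simp add: s_def)
  have injs: "inj s" using permutes_inj[OF sP] .
  have "(\<lambda>w. bb (map s w)) = lnb (2 # 1 # [3..<p+1])"
    using lnb_map[OF injs, of "2 # 1 # [3..<p+1]"] unfolding md bb_def .
  also have "\<dots> = - bb" unfolding bb_def up by (rule lnb_swap)
  finally have bbs: "(\<lambda>w. bb (map s w)) = - bb" .
  have ta: "tact s (tens h bb) = - tens h bb"
    unfolding tact_tens hs bbs by (rule tens_negR)
  define r where "r = tact s (tens h bb) - tens h bb"
  have rW: "r \<in> coinv_rel p" unfolding r_def by (rule W_rel[OF sP tV])
  have eq: "tens z bb = fscale \<alpha> v0 + - r"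
    unfolding r_def ta v0_def
    using two by (auto simp: fun_eq_iff tens_def fscale_def h_def y_def field_simps)
  have 1: "fscale \<alpha> v0 \<in> fspan (insert v0 (coinv_rel p))" by (intro fspan_scale fspan_base) simp
  have 2: "- r \<in> fspan (insert v0 (coinv_rel p))" by (intro fspan_neg fspan_base) (simp add: rW)
  show ?thesis using fspan_add[OF 1 2] eq unfolding v0_def bb_def by simp
qed

lemma UB2:
  assumes p: "2 \<le> p" and two: "(2::'k::field) \<noteq> 0" and z: "z \<in> (RZ p :: (nat \<Rightarrow> 'k) set)"
    and c: "c \<noteq> []" "distinct c" "set c = {1..p}"
  shows "tens z (lnb c) \<in> fspan (insert (tens e12 (lnb [1..<p+1])) (coinv_rel p))"
proof -
  have lc: "length c = p" using distinct_card[OF c(2)] c(3) by simp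
  define \<sigma> where "\<sigma> = (\<lambda>k. if k \<in> {1..p} then c ! (k - 1) else k)"
  have inj: "inj_on \<sigma> {1..p}"
  proof (rule inj_onI)
    fix k k' assume k: "k \<in> {1..p}" "k' \<in> {1..p}" "\<sigma> k = \<sigma> k'"
    then have "c ! (k - 1) = c ! (k' - 1)" by (simp add: \<sigma>_def)
    then have "k - 1 = k' - 1" using nth_eq_iff_index_eq[OF c(2)] k lc by auto
    then show "k = k'" using k by auto
  qed
  have img: "\<sigma> ` {1..p} \<subseteq> {1..p}"
  proof
    fix x assume "x \<in> \<sigma> ` {1..p}"
    then obtain k where k: "k \<in> {1..p}" "x = c ! (k - 1)" by (auto simp: \<sigma>_def)
    then have "x \<in> set c" using lc by auto
    then show "x \<in> {1..p}" using c(3) by simp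
  qed
  have bij: "bij_betw \<sigma> {1..p} {1..p}"
    unfolding bij_betw_def using inj endo_inj_surj[OF _ img inj] by simp
  have \<sigma>P: "\<sigma> permutes {1..p}" by (rule bij_imp_permutes[OF bij]) (auto simp: \<sigma>_def)
  have mc: "map \<sigma> [1..<p+1] = c"
  proof (rule nth_equalityI)
    show "length (map \<sigma> [1..<p+1]) = length c" using lc by (simp del: upt_Suc)
    fix j assume "j < length (map \<sigma> [1..<p+1])"
    then have j: "j < p" by (simp del: upt_Suc)
    then show "map \<sigma> [1..<p+1] ! j = c ! j" by (simp add: \<sigma>_def del: upt_Suc)
  qed
  define t where "t = tens z (lnb c)"
  have tV: "t \<in> ftensor (RZ p) (LieOp p)" unfolding t_def
    by (rule tens_in_ftensor[OF z lnb_in_LieOp[OF c]])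
  have lm: "(\<lambda>w. lnb c (map \<sigma> w)) = lnb [1..<p+1]"
    using lnb_map[OF permutes_inj[OF \<sigma>P], of "[1..<p+1]"] unfolding mc .
  have ta: "tact \<sigma> t = tens (z \<circ> \<sigma>) (lnb [1..<p+1])" unfolding t_def tact_tens lm ..
  have 1: "tact \<sigma> t \<in> fspan (insert (tens e12 (lnb [1..<p+1])) (coinv_rel p))"
    unfolding ta by (rule UB1[OF p two RZ_perm[OF \<sigma>P z]])
  have 2: "tact \<sigma> t - t \<in> fspan (insert (tens e12 (lnb [1..<p+1])) (coinv_rel p))"
    by (intro fspan_base) (simp add: W_rel[OF \<sigma>P tV])
  have "t = tact \<sigma> t - (tact \<sigma> t - t)" by simp
  then show ?thesis using fspan_diff[OF 1 2] unfolding t_def by metis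
qed

lemma UB3:
  assumes p: "2 \<le> p" and two: "(2::'k::field) \<noteq> 0"
  shows "(ftensor (RZ p) (LieOp p) :: (nat \<times> nat list \<Rightarrow> 'k) set)
     \<subseteq> fspan (insert (tens e12 (lnb [1..<p+1])) (coinv_rel p))"
  unfolding ftensor_tens
proof (rule fspan_minimal, rule subsetI)
  fix x assume "x \<in> {tens z l | z l. z \<in> (RZ p :: (nat \<Rightarrow> 'k) set) \<and> l \<in> LieOp p}"
  then obtain z l where x: "x = tens z l" "z \<in> RZ p" "l \<in> (LieOp p :: (nat list \<Rightarrow> 'k) set)" by blast
  have l: "l \<in> fspan (LN {1..p})" using x(3) LieOp_LN by blast
  show "x \<in> fspan (insert (tens e12 (lnb [1..<p+1])) (coinv_rel p))"
    unfolding x(1)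
  proof (rule span_map[OF tens_addR tens_scR l])
    fix s :: "nat list \<Rightarrow> 'k" assume "s \<in> LN {1..p}"
    then obtain c where "s = lnb c" "c \<noteq> []" "distinct c" "set c = {1..p}" by (rule LN_E)
    then show "tens z s \<in> fspan (insert (tens e12 (lnb [1..<p+1])) (coinv_rel p))"
      using UB2[OF p two x(2)] by simp
  qed
qed

lemma LieOp_supp:
  assumes l: "l \<in> (LieOp p :: (nat list \<Rightarrow> 'k::field) set)"
  shows "\<forall>w. w \<notin> Wn {1..p} p \<longrightarrow> l w = 0"
proof (rule span_supp)
  show "l \<in> fspan (LN {1..p})" using l LieOp_LN by blast
  fix s :: "nat list \<Rightarrow> 'k" and w assume s: "s \<in> LN {1..p}" and w: "w \<notin> Wn {1..p} p"
  from s obtain e where e: "s = lnb e" "e \<noteq> []" "distinct e" "set e = {1..p}" by (rule LN_E)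
  have le: "length e = p" using distinct_card[OF e(3)] e(4) by simp
  have "hom p s" using hom_lnb[OF e(2)] e(1) le by simp
  moreover have "lsup {1..p} s" using lsup_lnb[of e "{1..p}"] e by simp
  ultimately show "s w = 0" using w unfolding hom_def lsup_def Wn_def by blast
qed

lemma V_supp:
  assumes t: "t \<in> (ftensor (RZ p) (LieOp p) :: (nat \<times> nat list \<Rightarrow> 'k::field) set)"
  shows "\<forall>y. y \<notin> {1..p} \<times> Wn {1..p} p \<longrightarrow> t y = 0"
proof (rule span_supp)
  show "t \<in> fspan {tens z l | z l. z \<in> RZ p \<and> l \<in> (LieOp p :: (nat list \<Rightarrow> 'k) set)}"
    using t by (simp add: ftensor_tens)
  fix s y assume s: "s \<in> {tens z l | z l. z \<in> RZ p \<and> l \<in> (LieOp p :: (nat list \<Rightarrow> 'k) set)}"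
    and y: "y \<notin> {1..p} \<times> Wn {1..p} p"
  then obtain z l where zl: "s = tens z l" "z \<in> RZ p" "l \<in> (LieOp p :: (nat list \<Rightarrow> 'k) set)" by blast
  obtain i w where yi: "y = (i, w)" by (cases y)
  have "i \<notin> {1..p} \<or> w \<notin> Wn {1..p} p" using y yi by auto
  then show "s y = 0" using zl LieOp_supp[OF zl(3)] unfolding yi tens_def by (auto simp: RZ_def)
qed

theorem main:
  fixes p :: nat
  assumes ch: "CHAR('k::field) = p" and p3: "p \<ge> 3"
  shows "coinv_rel p \<subseteq> (ftensor (RZ p) (LieOp p) :: (nat \<times> nat list \<Rightarrow> 'k) set)
         \<and> coinv_dim TYPE('k) p = 1"
proof -
  have p0: "(of_nat p :: 'k) = 0" using ch by (simp add: of_nat_eq_0_iff_char_dvd)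
  have two: "(2::'k) \<noteq> 0"
  proof
    assume "(2::'k) = 0"
    then have "(of_nat 2 :: 'k) = 0" by simp
    then have "p dvd 2" using ch by (simp only: of_nat_eq_0_iff_char_dvd)
    then show False using p3 by (auto dest: dvd_imp_le)
  qed
  have p2: "2 \<le> p" using p3 by simp
  define V where "V = (ftensor (RZ p) (LieOp p) :: (nat \<times> nat list \<Rightarrow> 'k) set)"
  define W where "W = (coinv_rel p :: (nat \<times> nat list \<Rightarrow> 'k) set)"
  define v0 where "v0 = (tens e12 (lnb [1..<p+1]) :: nat \<times> nat list \<Rightarrow> 'k)"
  have WV: "W \<subseteq> V" unfolding W_def V_def by (rule W_sub_V[OF p0])
  have e12RZ: "(e12 :: nat \<Rightarrow> 'k) \<in> RZ p" using p2 by (auto simp: RZ_def e12_def sum_subtractf)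
  have ne: "[1..<p+1] \<noteq> []" "distinct [1..<p+1]" "set [1..<p+1] = {1..p}" using p2 by auto
  have v0V: "v0 \<in> V" unfolding v0_def V_def by (rule tens_in_ftensor[OF e12RZ lnb_in_LieOp[OF ne]])
  have v0W: "v0 \<notin> W"
  proof
    assume "v0 \<in> W"
    then have "phi p v0 = 0" unfolding W_def by (rule phi_W[OF p2])
    then show False using phi_v0[OF p2, where 'k='k] two unfolding v0_def by simp
  qed
  have Wspan: "fv.span W = W" unfolding W_def coinv_rel_def fspan_eq by (simp add: fv.span_span)
  define F where "F = (delta ` ({1..p} \<times> Wn {1..p} p) :: (nat \<times> nat list \<Rightarrow> 'k) set)"
  have Ffin: "finite F" unfolding F_def by (simp add: Wn_finite)
  have VF: "V \<subseteq> fv.span F"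
  proof
    fix t assume "t \<in> V"
    then have "\<forall>y. y \<notin> {1..p} \<times> Wn {1..p} p \<longrightarrow> t y = 0" unfolding V_def by (rule V_supp)
    then show "t \<in> fv.span F" unfolding F_def using supp_span[of "{1..p} \<times> Wn {1..p} p" t]
      by (simp add: Wn_finite fspan_eq)
  qed
  obtain B where B: "B \<subseteq> W" "fv.independent B" "W \<subseteq> fv.span B" "card B = fv.dim W"
    using fv.basis_exists[of W] by blast
  have Bfin: "finite B" using fv.independent_span_bound[OF Ffin B(2)] B(1) WV VF by blast
  have v0B: "v0 \<notin> fv.span B" using fv.span_mono[OF B(1)] Wspan v0W by blast
  have ind: "fv.independent (insert v0 B)" by (rule fv.independent_insertI[OF v0B B(2)])
  have v0nB: "v0 \<notin> B" using v0B fv.span_base by blast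
  have sub1: "insert v0 B \<subseteq> V" using B(1) WV v0V by blast
  have sub2: "V \<subseteq> fv.span (insert v0 B)"
  proof -
    have "V \<subseteq> fspan (insert v0 W)" unfolding V_def v0_def W_def by (rule UB3[OF p2 two])
    moreover have "fspan (insert v0 W) \<subseteq> fspan (insert v0 B)"
    proof (rule fspan_minimal)
      have "W \<subseteq> fv.span (insert v0 B)" using B(3) fv.span_mono[of B "insert v0 B"] by blast
      then show "insert v0 W \<subseteq> fspan (insert v0 B)" by (simp add: fspan_eq fv.span_base)
    qed
    ultimately show ?thesis by (simp add: fspan_eq)
  qed
  have dV: "fv.dim V = card (insert v0 B)" by (rule fv.dim_unique[OF sub1 sub2 ind refl])
  have "coinv_dim TYPE('k) p = card (insert v0 B) - card B"
    unfolding coinv_dim_def fdim_def using dV B(4) unfolding V_def W_def by simp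
  also have "\<dots> = 1" using Bfin v0nB by simp
  finally show ?thesis using WV unfolding V_def W_def by simp
qed


theorem lemma6p1:
  fixes p :: nat
  assumes "alg_closed TYPE('k::field)"
    and "CHAR('k) = p"
    and "p \<ge> 3"
  shows "coinv_rel p \<subseteq> (ftensor (RZ p) (LieOp p) :: (nat \<times> nat list \<Rightarrow> 'k) set)
         \<and> coinv_dim TYPE('k) p = 1"
  using main[OF assms(2,3)] .

end
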